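(* For all odd $n\geqslant3$ and all even $n\geqslant8$, \[ \sum_{i=0}^{\lfloor\frac{n-1}{2}\rfloor}\binom{n}{i+1,\,n-2i-1,\,i}<\sum_{i=0}^{\lfloor\frac{n-1}{2}\rfloor}\binom{n}{i,\,n-2i,\,i}. \]
   Context: $\binom{n}{a,b,c}=\frac{n!}{a!\,b!\,c!}$ denotes the trinomial coefficient for nonnegative integers $a+b+c=n$. *)

theory Defs
  imports Main
begin

definition trinomial :: "nat \<Rightarrow> nat \<Rightarrow> nat \<Rightarrow> nat \<Rightarrow> nat" where
  "trinomial n a b c = fact n div (fact a * fact b * fact c)"

end

theory Submission
  imports Defs
begin
definition f :: "nat \<Rightarrow> nat \<Rightarrow> nat \<Rightarrow> nat" where
  "f n a c = (n choose a) * ((n - a) choose c)"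
definition T :: "nat \<Rightarrow> nat \<Rightarrow> nat" where
  "T n k = (\<Sum>i\<le>n. f n (i+k) i)"
definition D :: "nat \<Rightarrow> nat \<Rightarrow> int" where
  "D n k = int (T n k) - int (T n (Suc k))"

lemma f_zero: "n < a + c \<Longrightarrow> f n a c = 0"
  unfolding f_def by (cases "a \<le> n") auto

lemma f_fact: "a + c \<le> n \<Longrightarrow> f n a c * (fact a * fact c * fact (n-a-c)) = fact n"
proof -
  assume h: "a + c \<le> n"
  have 1: "fact a * fact (n-a) * (n choose a) = (fact n :: nat)"
    using h by (intro binomial_fact_lemma) simp
  have 2: "fact c * fact (n-a-c) * ((n-a) choose c) = (fact (n-a) :: nat)"
    using h binomial_fact_lemma[of c "n-a"] by (simp add: diff_diff_add)
  have "f n a c * (fact a * fact c * fact (n-a-c)) = (n choose a) * fact a * (fact c * fact (n-a-c) * ((n-a) choose c))"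
    unfolding f_def by (simp only: ac_simps)
  also have "\<dots> = (n choose a) * fact a * fact (n-a)" by (simp only: 2)
  also have "\<dots> = fact n" using 1 by (simp only: ac_simps)
  finally show ?thesis .
qed

lemma f_sym: "f n a c = f n c a"
proof (cases "a + c \<le> n")
  case True
  have e: "n - c - a = n - a - c" by simp
  have "f n a c * (fact a * fact c * fact (n-a-c)) = f n c a * (fact a * fact c * fact (n-a-c))"
    using f_fact[OF True] f_fact[of c a n] True e by (simp add: ac_simps)
  then show ?thesis by simp
next
  case False then show ?thesis using f_zero by simp
qed

lemma trinomial_eq: "a + b + c = n \<Longrightarrow> trinomial n a b c = f n a c"
proof -
  assume h: "a + b + c = n"
  then have b: "b = n - a - c" by simp
  have "fact n = f n a c * (fact a * fact b * fact c)"
    using f_fact[of a c n] h b by (simp add: ac_simps)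
  then show ?thesis unfolding trinomial_def by simp
qed

lemma f_pascal: "f (Suc n) (Suc a) c = f n a c + f n (Suc a) c + (if c=0 then 0 else f n (Suc a) (c-1))"
proof (cases "a < n")
  case True
  then obtain m where m: "n - a = Suc m" by (metis Suc_diff_Suc)
  then have m2: "n - Suc a = m" by simp
  show ?thesis
  proof (cases c)
    case 0 then show ?thesis unfolding f_def using m m2 by simp
  next
    case (Suc c') then show ?thesis unfolding f_def using m m2
      by (simp add: algebra_simps)
  qed
next
  case False
  then show ?thesis unfolding f_def by (cases c) auto
qed

lemma f_00: "f n 0 0 = 1" unfolding f_def by simp

lemma T_ext: "n \<le> N \<Longrightarrow> T n k = (\<Sum>i\<le>N. f n (i+k) i)"
  unfolding T_def by (rule sum.mono_neutral_left) (auto, rule ccontr, simp add: f_zero)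

lemma T_Suc_Suc: "T (Suc n) (Suc k) = T n k + T n (Suc k) + T n (Suc (Suc k))"
proof -
  have "T (Suc n) (Suc k) = (\<Sum>i\<le>Suc n. f n (i+k) i + f n (i + Suc k) i
      + (if i=0 then 0 else f n (Suc (i+k)) (i-1)))"
    unfolding T_def by (intro sum.cong refl) (simp add: f_pascal)
  also have "\<dots> = (\<Sum>i\<le>Suc n. f n (i+k) i) + (\<Sum>i\<le>Suc n. f n (i+Suc k) i)
      + (\<Sum>i\<le>Suc n. (if i=0 then 0 else f n (Suc (i+k)) (i-1)))"
    by (simp only: sum.distrib)
  also have "(\<Sum>i\<le>Suc n. (if i=0 then 0 else f n (Suc (i+k)) (i-1))) = (\<Sum>i\<le>n. f n (i + Suc (Suc k)) i)"
    by (subst sum.atMost_Suc_shift) simp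
  also have "\<dots> = T n (Suc (Suc k))" unfolding T_def ..
  also have "(\<Sum>i\<le>Suc n. f n (i+k) i) = T n k" by (rule T_ext[symmetric]) simp
  also have "(\<Sum>i\<le>Suc n. f n (i+Suc k) i) = T n (Suc k)" by (rule T_ext[symmetric]) simp
  finally show ?thesis .
qed

lemma T_Suc_0: "T (Suc n) 0 = T n 0 + 2 * T n 1"
proof -
  have "T (Suc n) 0 = 1 + (\<Sum>i\<le>n. f (Suc n) (Suc i) (Suc i))"
    unfolding T_def by (subst sum.atMost_Suc_shift) (simp add: f_00)
  also have "\<dots> = 1 + (\<Sum>i\<le>n. f n (Suc i) i + f n (Suc i) (Suc i) + f n (Suc i) i)"
    by (intro arg_cong2[where f="(+)"] sum.cong refl) (simp add: f_pascal f_sym[of n i "Suc i" for i])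
  also have "\<dots> = 1 + (\<Sum>i\<le>n. f n (Suc i) (Suc i)) + 2 * (\<Sum>i\<le>n. f n (i+1) i)"
    by (simp add: sum.distrib)
  also have "1 + (\<Sum>i\<le>n. f n (Suc i) (Suc i)) = T n 0"
    by (simp only: T_ext[of n "Suc n" 0, OF le_SucI[OF le_refl]] sum.atMost_Suc_shift) (simp add: f_00)
  finally show ?thesis unfolding T_def by simp
qed

lemma T_0: "T 0 k = (if k = 0 then 1 else 0)"
  unfolding T_def f_def by simp

lemma D_0: "D 0 k = (if k = 0 then 1 else 0)"
  unfolding D_def by (simp add: T_0)

lemma D_Suc_0: "D (Suc n) 0 = D n 1"
  unfolding D_def using T_Suc_0[of n] T_Suc_Suc[of n 0] by simp

lemma D_Suc_Suc: "D (Suc n) (Suc k) = D n k + D n (Suc k) + D n (Suc (Suc k))"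
  unfolding D_def using T_Suc_Suc[of n k] T_Suc_Suc[of n "Suc k"] by simp

lemma D_nonneg: "D n k \<ge> 0"
proof (induction n arbitrary: k)
  case 0 then show ?case by (simp add: D_0)
next
  case (Suc n) then show ?case
    by (cases k) (simp_all add: D_Suc_0 D_Suc_Suc add_nonneg_nonneg)
qed

lemma D_pos1: "n \<ge> 1 \<Longrightarrow> D n 1 \<ge> 1"
proof (induction n rule: nat_induct_at_least)
  case base then show ?case by (simp add: D_Suc_Suc D_0)
next
  case (Suc n) then show ?case
    using D_nonneg[of n 0] D_nonneg[of n 2] by (simp add: D_Suc_Suc numeral_2_eq_2)
qed

lemma D_pos0: "n \<ge> 2 \<Longrightarrow> D n 0 \<ge> 1"
  using D_pos1[of "n-1"] D_Suc_0[of "n-1"] by (cases n) auto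

lemma D_two: "D (Suc (Suc n)) 0 = D n 0 + D n 1 + D n 2"
  by (simp add: D_Suc_0 D_Suc_Suc numeral_2_eq_2)

lemma D_base: "D 8 0 = 91 \<and> D 8 1 = 232 \<and> D 8 2 = 280"
  by (simp add: numeral_eq_Suc D_Suc_0 D_Suc_Suc D_0)


lemma central_step: "(Suc (Suc (2*m)) choose Suc m) \<le> 4 * (2*m choose m)"
proof -
  define X where "X = (Suc (Suc (2*m)) choose Suc m)"
  define Y where "Y = (Suc (2*m) choose Suc m)"
  define Z where "Z = (2*m choose m)"
  have 1: "Suc m * X = Suc (Suc (2*m)) * (Suc (2*m) choose m)"
    unfolding X_def by (rule Suc_times_binomial)
  have 2: "(Suc (2*m) choose m) = Y"
    unfolding Y_def using binomial_symmetric[of m "Suc (2*m)"] by simp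
  have 3: "Suc m * Y = Suc (2*m) * Z"
    unfolding Y_def Z_def by (rule Suc_times_binomial)
  have "Suc m * (Suc m * X) = Suc (Suc (2*m)) * (Suc m * Y)"
    using 1 2 by (simp only: mult.left_commute)
  also have "\<dots> = (2 * Suc m) * (Suc (2*m) * Z)" using 3 by simp
  also have "\<dots> = Suc m * (2 * Suc (2*m) * Z)" by (simp only: ac_simps)
  finally have "Suc m * X = 2 * Suc (2*m) * Z" by (simp only: mult_left_cancel nat.distinct simp_thms)
  also have "\<dots> \<le> Suc m * (4 * Z)" by simp
  finally have "X \<le> 4 * Z" by (simp only: Suc_mult_le_cancel1)
  then show ?thesis unfolding X_def Z_def .
qed

lemma even_bound: "m \<ge> 4 \<Longrightarrow> 4 * D (2*m) 0 \<ge> 5 * int (2*m choose m) \<and>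
   4 * D (2*m) 1 \<ge> 10 * int (2*m choose m) \<and> 4 * D (2*m) 2 \<ge> 10 * int (2*m choose m)"
proof (induction m rule: nat_induct_at_least)
  case base
  have c: "(8::nat) choose 4 = 70" by (simp add: numeral_eq_Suc)
  show ?case using D_base c by simp
next
  case (Suc m)
  let ?C = "int (2*m choose m)"
  have cs: "int (2 * Suc m choose Suc m) \<le> 4 * ?C"
    using central_step[of m] by (simp add: of_nat_mono)
  have e: "2 * Suc m = Suc (Suc (2*m))" by simp
  have a0: "D (2 * Suc m) 0 = D (2*m) 0 + D (2*m) 1 + D (2*m) 2"
    unfolding e by (rule D_two)
  have a1: "D (2 * Suc m) 1 = D (2*m) 1 + (D (2*m) 0 + D (2*m) 1 + D (2*m) 2) + (D (2*m) 1 + D (2*m) 2 + D (2*m) 3)"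
    unfolding e by (simp add: D_Suc_0 D_Suc_Suc numeral_3_eq_3 numeral_2_eq_2)
  have a2: "D (2 * Suc m) 2 = (D (2*m) 0 + D (2*m) 1 + D (2*m) 2) + (D (2*m) 1 + D (2*m) 2 + D (2*m) 3)
      + (D (2*m) 2 + D (2*m) 3 + D (2*m) 4)"
    unfolding e by (simp add: D_Suc_0 D_Suc_Suc numeral_3_eq_3 numeral_2_eq_2 eval_nat_numeral)
  have n3: "D (2*m) 3 \<ge> 0" and n4: "D (2*m) 4 \<ge> 0" using D_nonneg by auto
  have c0: "?C \<ge> 0" by simp
  show ?case using Suc.IH a0 a1 a2 n3 n4 cs c0 by linarith
qed


lemma lhs_eq: "n \<ge> 1 \<Longrightarrow> (\<Sum>i = 0..(n - 1) div 2. trinomial n (i + 1) (n - 2 * i - 1) i) = T n 1"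
proof -
  assume n: "n \<ge> 1"
  have "(\<Sum>i = 0..(n - 1) div 2. trinomial n (i + 1) (n - 2 * i - 1) i) = (\<Sum>i = 0..(n - 1) div 2. f n (i+1) i)"
    by (intro sum.cong refl trinomial_eq) (use n in auto)
  also have "\<dots> = T n 1" unfolding T_def
    by (rule sum.mono_neutral_left) (auto intro!: f_zero)
  finally show ?thesis .
qed

lemma T0_split: "T n 0 = (\<Sum>i\<le>n div 2. f n i i)"
  unfolding T_def add_0_right by (rule sum.mono_neutral_right) (auto intro!: f_zero)

lemma rhs_eq: "n \<ge> 1 \<Longrightarrow> int (\<Sum>i = 0..(n - 1) div 2. trinomial n i (n - 2 * i) i)
   = int (T n 0) - (if even n then int (n choose (n div 2)) else 0)"
proof -
  assume n: "n \<ge> 1"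
  have "(\<Sum>i = 0..(n - 1) div 2. trinomial n i (n - 2 * i) i) = (\<Sum>i\<le>(n - 1) div 2. f n i i)"
    unfolding atLeast0AtMost by (intro sum.cong refl trinomial_eq) auto
  moreover have "T n 0 = (\<Sum>i\<le>(n - 1) div 2. f n i i) + (if even n then (n choose (n div 2)) else 0)"
  proof (cases "even n")
    case True
    then obtain m where m: "n = 2 * m" by blast
    with n obtain j where j: "m = Suc j" by (cases m) auto
    have "(n - 1) div 2 = j" using m j by simp
    moreover have "n div 2 = Suc j" using m j by simp
    moreover have "f n (Suc j) (Suc j) = (n choose (n div 2))" using m j unfolding f_def by simp
    ultimately show ?thesis using True by (simp add: T0_split)
  next
    case False
    then have "(n - 1) div 2 = n div 2" by (metis odd_two_times_div_two_nat div_mult_self1_is_m zero_less_numeral)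
    then show ?thesis using False by (simp add: T0_split)
  qed
  ultimately show ?thesis by simp
qed

theorem lemma5p7:
  fixes n :: nat
  assumes "(odd n \<and> n \<ge> 3) \<or> (even n \<and> n \<ge> 8)"
  shows "(\<Sum>i = 0..(n - 1) div 2. trinomial n (i + 1) (n - 2 * i - 1) i)
         < (\<Sum>i = 0..(n - 1) div 2. trinomial n i (n - 2 * i) i)"
proof -
  have n: "n \<ge> 1" using assms by auto
  have key: "int (T n 1) < int (T n 0) - (if even n then int (n choose (n div 2)) else 0)"
  proof (cases "even n")
    case True
    then obtain m where m: "n = 2 * m" by blast
    with assms True have "m \<ge> 4" by auto
    from even_bound[OF this] have "4 * D n 0 \<ge> 5 * int (n choose (n div 2))" using m by simp
    moreover have "int (n choose (n div 2)) > 0" by simp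
    ultimately have "D n 0 > int (n choose (n div 2))" by linarith
    then show ?thesis using True unfolding D_def by simp
  next
    case False
    with assms have "n \<ge> 2" by auto
    from D_pos0[OF this] show ?thesis using False unfolding D_def by simp
  qed
  have "int (\<Sum>i = 0..(n - 1) div 2. trinomial n (i + 1) (n - 2 * i - 1) i)
      < int (\<Sum>i = 0..(n - 1) div 2. trinomial n i (n - 2 * i) i)"
    using key lhs_eq[OF n] rhs_eq[OF n] by (simp only:)
  then show ?thesis by (simp only: of_nat_less_iff)
qed

end
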